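(* Consider the following game among $N \ge 2$ domains $i = 1,\dots,N$. Domain $i$ chooses quality $q_i \in [0,1]$ and generality $g_i \in [0,1]$ and receives payoff \[ \pi_i = \alpha_i q_i (1 + \beta g_i) + \lambda \sum_{j \neq i} q_j g_j - \Big(\tfrac{\gamma_q}{2} q_i^2 + \tfrac{\gamma_g}{2} g_i^2 q_i + \kappa g_i\Big), \] with parameters $\alpha_i > 0$, $\beta \ge 0$, $\lambda > 0$, $\gamma_q, \gamma_g > 0$, $\kappa \ge 0$. Fix quality levels $q_i > 0$. Let $g_i^{NE}$ be the Nash equilibrium generality of domain $i$ (the maximizer of $\pi_i$ over $g_i$, taking the other domains' choices as given) and let $g_i^{SO}$ be the socially optimal generality (the maximizer over $g_i$ of total domain welfare $\sum_{k=1}^N \pi_k$, abstracting from any consumer utility term), and suppose both are interior solutions characterized by their first-order conditions. Then $g_i^{NE} < g_i^{SO}$, and the generality gap is \[ \Delta g_i = g_i^{SO} - g_i^{NE} = \frac{(N-1)\lambda}{\gamma_g}, \] which is increasing in $N$ and $\lambda$ and decreasing in $\gamma_g$.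
   Context: The model describes an organization with $N$ domain teams producing data products; $q_i$ is the quality and $g_i$ the cross-domain generality (reusability) of domain $i$'s product. The payoff consists of own-analytics benefit $\alpha_i q_i(1+\beta g_i)$, cross-domain benefit $\lambda\sum_{j\ne i} q_j g_j$ from other domains' products, and cost $C_i(q_i,g_i) = \frac{\gamma_q}{2}q_i^2 + \frac{\gamma_g}{2}g_i^2 q_i + \kappa g_i$. *)

theory Defs
  imports Complex_Main
begin

definition payoff ::
  "nat \<Rightarrow> (nat \<Rightarrow> real) \<Rightarrow> real \<Rightarrow> real \<Rightarrow> real \<Rightarrow> real \<Rightarrow> real
   \<Rightarrow> (nat \<Rightarrow> real) \<Rightarrow> (nat \<Rightarrow> real) \<Rightarrow> nat \<Rightarrow> real" where
  "payoff N alpha beta lam gq gg kappa q g i =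
     alpha i * q i * (1 + beta * g i)
     + lam * (\<Sum>j\<in>{..<N} - {i}. q j * g j)
     - (gq / 2 * (q i)^2 + gg / 2 * (g i)^2 * q i + kappa * g i)"

definition welfare ::
  "nat \<Rightarrow> (nat \<Rightarrow> real) \<Rightarrow> real \<Rightarrow> real \<Rightarrow> real \<Rightarrow> real \<Rightarrow> real
   \<Rightarrow> (nat \<Rightarrow> real) \<Rightarrow> (nat \<Rightarrow> real) \<Rightarrow> real" where
  "welfare N alpha beta lam gq gg kappa q g =
     (\<Sum>k<N. payoff N alpha beta lam gq gg kappa q g k)"

end

theory Submission
  imports Defs
begin

lemma quad_max:
  fixes a b c m :: real and f :: "real \<Rightarrow> real"
  assumes c: "c > 0" and m: "0 < m" "m < 1"
    and f: "\<And>x. f x = a + b * x - c * x^2"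
    and mx: "\<And>x. 0 \<le> x \<Longrightarrow> x \<le> 1 \<Longrightarrow> f x \<le> f m"
  shows "b = 2 * c * m"
proof (rule ccontr)
  assume ne: "b \<noteq> 2 * c * m"
  define d where "d = b - 2 * c * m"
  have key: "f (m + t) - f m = t * (d - c * t)" for t
    unfolding f d_def by (simp add: algebra_simps power2_eq_square)
  show False
  proof (cases "d > 0")
    case True
    define t where "t = min (d / (2*c)) ((1 - m) / 2)"
    have t0: "t > 0" using True c m by (simp add: t_def)
    have "c * t \<le> c * (d / (2*c))" using c by (intro mult_left_mono) (auto simp: t_def)
    also have "\<dots> = d / 2" using c by simp
    finally have "d - c * t > 0" using True by linarith
    hence "f (m + t) - f m > 0" using key t0 by simp
    moreover have "t \<le> (1 - m) / 2" unfolding t_def by (rule min.cobounded2)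
    hence "f (m + t) \<le> f m" using t0 m by (intro mx) auto
    ultimately show False by linarith
  next
    case False
    hence dn: "d < 0" using ne d_def by linarith
    define t where "t = min (- d / (2*c)) (m / 2)"
    have "- d / (2*c) > 0" using dn c by (intro divide_pos_pos) auto
    hence t0: "t > 0" using m by (simp add: t_def)
    have "c * t \<le> c * (- d / (2*c))" using c by (intro mult_left_mono) (auto simp: t_def)
    also have "\<dots> = - d / 2" using c by simp
    finally have "d + c * t < 0" using dn by linarith
    have "f (m + (-t)) - f m = t * (- d - c * t)" using key[of "-t"] by (simp add: algebra_simps)
    also have "\<dots> > 0" using t0 \<open>d + c * t < 0\<close> by simp
    finally have "f (m - t) - f m > 0" by simp
    moreover have "f (m - t) \<le> f m" using mx t0 m by (intro mx) (auto simp: t_def)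
    ultimately show False by linarith
  qed
qed

lemma sum_upd_diff:
  fixes q g :: "nat \<Rightarrow> real"
  shows "(\<Sum>j\<in>S. q j * (g(i := x)) j) = (\<Sum>j\<in>S. q j * (g(i := 0)) j) + (if i \<in> S \<and> finite S then q i * x else 0)"
proof (cases "finite S")
  case True
  have "(\<Sum>j\<in>S. q j * (g(i := x)) j) - (\<Sum>j\<in>S. q j * (g(i := 0)) j)
     = (\<Sum>j\<in>S. q j * (g(i := x)) j - q j * (g(i := 0)) j)" by (simp add: sum_subtractf)
  also have "\<dots> = (\<Sum>j\<in>S. if j = i then q i * x else 0)" by (rule sum.cong) auto
  also have "\<dots> = (if i \<in> S then q i * x else 0)" using True by (simp add: sum.delta')
  finally show ?thesis using True by simp
qed simp

lemma payoff_self: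
  "payoff N alpha beta lam gq gg kappa q (g(i := x)) i
   = payoff N alpha beta lam gq gg kappa q (g(i := 0)) i
     + (alpha i * q i * beta - kappa) * x - (gg * q i / 2) * x^2"
  unfolding payoff_def using sum_upd_diff[of q g i x "{..<N} - {i}"]
  by (simp add: algebra_simps)

lemma payoff_other:
  assumes "k \<noteq> i" "i < N"
  shows "payoff N alpha beta lam gq gg kappa q (g(i := x)) k
   = payoff N alpha beta lam gq gg kappa q (g(i := 0)) k + lam * q i * x"
  unfolding payoff_def using sum_upd_diff[of q g i x "{..<N} - {k}"] assms
  by (simp add: algebra_simps)

lemma welfare_upd:
  assumes "i < N"
  shows "welfare N alpha beta lam gq gg kappa q (g(i := x))
   = welfare N alpha beta lam gq gg kappa q (g(i := 0))
     + (alpha i * q i * beta - kappa + (real N - 1) * lam * q i) * x - (gg * q i / 2) * x^2"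
proof -
  let ?P = "\<lambda>x k. payoff N alpha beta lam gq gg kappa q (g(i := x)) k"
  have split: "(\<Sum>k<N. h k) = h i + (\<Sum>k\<in>{..<N} - {i}. h k)" for h :: "nat \<Rightarrow> real"
    using assms by (simp add: sum.remove)
  have "(\<Sum>k\<in>{..<N} - {i}. ?P x k) = (\<Sum>k\<in>{..<N} - {i}. ?P 0 k + lam * q i * x)"
    by (rule sum.cong) (auto intro: payoff_other assms)
  also have "\<dots> = (\<Sum>k\<in>{..<N} - {i}. ?P 0 k) + (real N - 1) * (lam * q i * x)"
    using assms by (simp add: sum.distrib card_Diff_singleton of_nat_diff)
  finally show ?thesis
    unfolding welfare_def split[of "?P x"] split[of "?P 0"] payoff_self[of N alpha beta lam gq gg kappa q g i x]
    by (simp add: algebra_simps)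
qed

theorem proposition1:
  fixes N :: nat and alpha :: "nat \<Rightarrow> real"
    and beta lam gq gg kappa :: real
    and q g :: "nat \<Rightarrow> real" and i :: nat and gNE gSO :: real
  assumes N2: "N \<ge> 2"
    and alpha_pos: "\<And>j. j < N \<Longrightarrow> alpha j > 0"
    and beta_nn: "beta \<ge> 0" and lam_pos: "lam > 0"
    and gq_pos: "gq > 0" and gg_pos: "gg > 0" and kappa_nn: "kappa \<ge> 0"
    and q_range: "\<And>j. j < N \<Longrightarrow> 0 < q j \<and> q j \<le> 1"
    and g_range: "\<And>j. j < N \<Longrightarrow> 0 \<le> g j \<and> g j \<le> 1"
    and i_dom: "i < N"
    and NE_interior: "0 < gNE" "gNE < 1"
    and NE_max: "\<And>x. 0 \<le> x \<Longrightarrow> x \<le> 1 \<Longrightarrow>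
       payoff N alpha beta lam gq gg kappa q (g(i := x)) i
         \<le> payoff N alpha beta lam gq gg kappa q (g(i := gNE)) i"
    and SO_interior: "0 < gSO" "gSO < 1"
    and SO_max: "\<And>x. 0 \<le> x \<Longrightarrow> x \<le> 1 \<Longrightarrow>
       welfare N alpha beta lam gq gg kappa q (g(i := x))
         \<le> welfare N alpha beta lam gq gg kappa q (g(i := gSO))"
  shows "gNE < gSO
    \<and> gSO - gNE = (real N - 1) * lam / gg
    \<and> (\<forall>N'::nat. N < N' \<longrightarrow> (real N - 1) * lam / gg < (real N' - 1) * lam / gg)
    \<and> (\<forall>lam'. lam < lam' \<longrightarrow> (real N - 1) * lam / gg < (real N - 1) * lam' / gg)
    \<and> (\<forall>gg'. gg < gg' \<longrightarrow> (real N - 1) * lam / gg' < (real N - 1) * lam / gg)"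
proof -
  have qi: "q i > 0" using q_range i_dom by auto
  have c: "gg * q i / 2 > 0" using gg_pos qi by simp
  have ne: "alpha i * q i * beta - kappa = 2 * (gg * q i / 2) * gNE"
    by (rule quad_max[OF c NE_interior, where f = "\<lambda>x. payoff N alpha beta lam gq gg kappa q (g(i := x)) i"])
       (rule payoff_self, rule NE_max)
  have so: "alpha i * q i * beta - kappa + (real N - 1) * lam * q i = 2 * (gg * q i / 2) * gSO"
    by (rule quad_max[OF c SO_interior, where f = "\<lambda>x. welfare N alpha beta lam gq gg kappa q (g(i := x))"])
       (rule welfare_upd[OF i_dom], rule SO_max)
  have "q i * ((real N - 1) * lam) = q i * (gg * (gSO - gNE))" using ne so by (simp add: algebra_simps)
  hence "(real N - 1) * lam = gg * (gSO - gNE)" using qi by simp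
  hence gap: "gSO - gNE = (real N - 1) * lam / gg" using gg_pos by (simp add: field_simps)
  have Npos: "real N - 1 > 0" using N2 by simp
  have pos: "(real N - 1) * lam / gg > 0" using Npos lam_pos gg_pos by simp
  have m1: "\<forall>N'::nat. N < N' \<longrightarrow> (real N - 1) * lam / gg < (real N' - 1) * lam / gg"
    using lam_pos gg_pos by (auto simp: divide_strict_right_mono mult_strict_right_mono)
  have m2: "\<forall>lam'. lam < lam' \<longrightarrow> (real N - 1) * lam / gg < (real N - 1) * lam' / gg"
    using Npos gg_pos by (auto simp: divide_strict_right_mono)
  have m3: "\<forall>gg'. gg < gg' \<longrightarrow> (real N - 1) * lam / gg' < (real N - 1) * lam / gg"
    using Npos lam_pos gg_pos by (auto intro!: divide_strict_left_mono)
  have "gNE < gSO" using gap pos by linarith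
  thus ?thesis using gap m1 m2 m3 by blast
qed

end
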